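(* For $\varepsilon\in(0,1)$ and integers $j\ge 1$ define \[ A_{j,\varepsilon}= \begin{cases} \dfrac{2(-1)^{(j-1)/2}}{(j-2)\bigl(\frac{1}{2}(j-3)\bigr)!\sqrt{\pi}}, & \text{if } j\ge 3 \text{ and } j \text{ is odd},\\[1ex] \varepsilon, & \text{otherwise}. \end{cases} \] Then for every real $x$, \[ \int_{0}^{x} \exp\bigl(-\xi^{2}\operatorname{erf}(\xi)\bigr)\,d\xi =\sum_{n=0}^{\infty} \lim_{\varepsilon\to 0} \left( \sum_{\substack{k_{1}+2k_{2}+\cdots+nk_{n}=n\\ k_{1},k_{2},\dots,k_{n}\ge 0}} \prod_{j=1}^{n} \frac{A_{j,\varepsilon}^{\,k_{j}}}{k_{j}!} \right)\frac{x^{n+1}}{n+1}, \] where the inner sum runs over all tuples of nonnegative integers $(k_1,\dots,k_n)$ with $\sum_{j=1}^n jk_j=n$ (for $n=0$ the inner sum is the empty product, equal to $1$).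
   Context: $\operatorname{erf}(x)=\frac{2}{\sqrt{\pi}}\int_0^x e^{-s^2}\,ds$ is the Gauss error function. *)

theory Defs
  imports "HOL-Analysis.Analysis"
begin

definition oint :: "real \<Rightarrow> real \<Rightarrow> (real \<Rightarrow> real) \<Rightarrow> real" where
  "oint a b f = (if a \<le> b then integral {a..b} f else - integral {b..a} f)"

definition erf :: "real \<Rightarrow> real" where
  "erf x = 2 / sqrt pi * oint 0 x (\<lambda>s. exp (- (s^2)))"

definition A :: "nat \<Rightarrow> real \<Rightarrow> real" where
  "A j \<epsilon> = (if j \<ge> 3 \<and> odd j
      then 2 * (-1) ^ ((j - 1) div 2) / ((real j - 2) * fact ((j - 3) div 2) * sqrt pi)
      else \<epsilon>)"

definition tuples :: "nat \<Rightarrow> (nat \<Rightarrow> nat) set" where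
  "tuples n = {k. (\<forall>j. j \<notin> {1..n} \<longrightarrow> k j = 0) \<and> (\<Sum>j=1..n. j * k j) = n}"

definition inner_sum :: "nat \<Rightarrow> real \<Rightarrow> real" where
  "inner_sum n \<epsilon> = (\<Sum>k\<in>tuples n. \<Prod>j=1..n. A j \<epsilon> ^ k j / fact (k j))"

end

theory Submission
  imports Defs
begin


definition c :: "nat \<Rightarrow> real" where "c n = inner_sum n 0"
definition a :: "nat \<Rightarrow> real" where "a j = A j 0"
definition W :: "(nat \<Rightarrow> nat) \<Rightarrow> nat \<Rightarrow> real" where
  "W k N = (\<Prod>j=1..N. a j ^ k j / fact (k j))"

lemma c_alt: "c n = (\<Sum>k\<in>tuples n. W k n)"
  by (simp add: c_def inner_sum_def W_def a_def)

lemma finite_tuples: "finite (tuples n)"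
proof -
  have "tuples n \<subseteq> {f. \<forall>x. (x \<in> {1..n} \<longrightarrow> f x \<in> {0..n}) \<and> (x \<notin> {1..n} \<longrightarrow> f x = 0)}"
  proof
    fix k assume k: "k \<in> tuples n"
    have "k x \<le> n" if "x \<in> {1..n}" for x
    proof -
      have "x * k x \<le> (\<Sum>j=1..n. j * k j)"
        by (rule member_le_sum) (use that in auto)
      also have "\<dots> = n" using k by (simp add: tuples_def)
      finally show ?thesis using that
        by (metis atLeastAtMost_iff le_trans mult_le_mono1 mult_1)
    qed
    then show "k \<in> {f. \<forall>x. (x \<in> {1..n} \<longrightarrow> f x \<in> {0..n}) \<and> (x \<notin> {1..n} \<longrightarrow> f x = 0)}"
      using k by (auto simp: tuples_def)
  qed
  moreover have "finite {f. \<forall>x. (x \<in> {1..n} \<longrightarrow> f x \<in> {0..n}) \<and> (x \<notin> {1..n} \<longrightarrow> f x = (0::nat))}"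
    by (rule finite_set_of_finite_funs) auto
  ultimately show ?thesis by (rule finite_subset)
qed

lemma tuples_0: "tuples 0 = {\<lambda>_. 0}"
  by (auto simp: tuples_def)

lemma c_0: "c 0 = 1"
  by (simp add: c_alt tuples_0 W_def)

lemma W_extend:
  assumes "\<And>j. j > m \<Longrightarrow> k j = 0" "m \<le> N"
  shows "W k N = W k m"
proof -
  have "W k N = (\<Prod>j\<in>{1..N}. a j ^ k j / fact (k j))" by (simp add: W_def)
  also have "\<dots> = (\<Prod>j\<in>{1..m}. a j ^ k j / fact (k j))"
    by (rule prod.mono_neutral_right) (use assms in auto)
  finally show ?thesis by (simp add: W_def)
qed

lemma W_step:
  assumes "j \<in> {1..N}" "k j \<ge> 1"
  shows "real (k j) * W k N = a j * W (k(j := k j - 1)) N"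
proof -
  obtain t where t: "k j = Suc t" using assms(2) by (cases "k j") auto
  have w1: "W k N = (a j ^ k j / fact (k j)) * (\<Prod>i\<in>{1..N}-{j}. a i ^ k i / fact (k i))"
    unfolding W_def by (rule prod.remove) (use assms in auto)
  have w2: "W (k(j := k j - 1)) N = (a j ^ t / fact t) * (\<Prod>i\<in>{1..N}-{j}. a i ^ k i / fact (k i))"
    unfolding W_def by (subst prod.remove[of _ j]) (use assms t in auto)
  have e: "real (k j) * (a j ^ k j / fact (k j)) = a j * (a j ^ t / fact t)"
  proof -
    have f: "(fact (k j)::real) = real (Suc t) * fact t" using t by (simp del: of_nat_Suc)
    have "(fact t::real) > 0" by simp
    then show ?thesis unfolding f using t by (simp del: of_nat_Suc add: field_simps)
  qed
  define P where "P = (\<Prod>i\<in>{1..N}-{j}. a i ^ k i / fact (k i))"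
  have "real (k j) * W k N = (real (k j) * (a j ^ k j / fact (k j))) * P" unfolding w1 P_def by (simp only: mult.assoc)
  also have "\<dots> = a j * (a j ^ t / fact t) * P" by (simp only: e)
  also have "\<dots> = a j * W (k(j := k j - 1)) N" unfolding w2 P_def by (simp only: mult.assoc)
  finally show ?thesis .
qed

lemma tuplesI:
  fixes k :: "nat \<Rightarrow> nat"
  assumes "\<forall>i. i \<notin> {1..N} \<longrightarrow> k i = 0" "(\<Sum>i=1..N. i * k i) = n"
  shows "k \<in> tuples n"
proof -
  have supp: "k i = 0" if "i \<notin> {1..n}" for i
  proof (rule ccontr)
    assume nz: "k i \<noteq> 0"
    have imp: "i \<notin> {1..N} \<longrightarrow> k i = 0" using assms(1) by (rule spec)
    have iN: "i \<in> {1..N}"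
    proof (rule ccontr)
      assume "i \<notin> {1..N}"
      with imp have "k i = 0" by (rule mp)
      with nz show False by (rule notE)
    qed
    have h1: "i * k i \<le> (\<Sum>i=1..N. i * k i)" using member_le_sum[of i "{1..N}" "\<lambda>i. i * k i"] iN by simp
    have h2: "i \<le> i * k i" using nz by simp
    have "i \<le> (\<Sum>i=1..N. i * k i)" using le_trans[OF h2 h1] .
    then have "i \<le> n" using assms(2) by simp
    then show False using that iN by auto
  qed
  have "(\<Sum>i=1..n. i * k i) = (\<Sum>i=1..max n N. i * k i)"
    by (rule sum.mono_neutral_left) (use supp in auto)
  also have "\<dots> = (\<Sum>i=1..N. i * k i)"
    by (rule sum.mono_neutral_right) (use assms(1) in auto)
  finally have "(\<Sum>i=1..n. i * k i) = n" using assms(2) by simp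
  then show ?thesis unfolding tuples_def using supp by blast
qed

lemma tuplesD:
  assumes "k \<in> tuples n" "n \<le> N"
  shows "\<forall>i. i \<notin> {1..N} \<longrightarrow> k i = 0" "(\<Sum>i=1..N. i * k i) = n"
proof -
  show "\<forall>i. i \<notin> {1..N} \<longrightarrow> k i = 0" using assms by (auto simp: tuples_def)
  have "(\<Sum>i=1..N. i * k i) = (\<Sum>i=1..n. i * k i)"
    by (rule sum.mono_neutral_right) (use assms in \<open>auto simp: tuples_def\<close>)
  then show "(\<Sum>i=1..N. i * k i) = n" using assms by (simp add: tuples_def)
qed

lemma ws_upd:
  fixes k :: "nat \<Rightarrow> nat"
  assumes "j \<in> {1..N}"
  shows "(\<Sum>i=1..N. i * (k(j:=v)) i) + j * k j = (\<Sum>i=1..N. i * k i) + j * v"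
proof -
  have gen: "\<And>S1 S2 R1 R2 x y::nat. S1 = x + R1 \<Longrightarrow> S2 = y + R2 \<Longrightarrow> R1 = R2 \<Longrightarrow> S1 + y = S2 + x"
    by simp
  have h1: "(\<Sum>i=1..N. i * (k(j:=v)) i) = j * v + (\<Sum>i\<in>{1..N}-{j}. i * (k(j:=v)) i)"
    using sum.remove[of "{1..N}" j "\<lambda>i. i * (k(j:=v)) i"] assms by simp
  have h2: "(\<Sum>i=1..N. i * k i) = j * k j + (\<Sum>i\<in>{1..N}-{j}. i * k i)"
    using sum.remove[of "{1..N}" j "\<lambda>i. i * k i"] assms by simp
  have h3: "(\<Sum>i\<in>{1..N}-{j}. i * (k(j:=v)) i) = (\<Sum>i\<in>{1..N}-{j}. i * k i)"
    by (rule sum.cong) auto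
  show ?thesis by (rule gen[OF h1 h2 h3])
qed

lemma inner_step:
  assumes j: "j \<in> {1..m}"
  shows "(\<Sum>k\<in>tuples m. real (k j) * W k m) = a j * c (m - j)"
proof -
  define inc where "inc = (\<lambda>k::nat\<Rightarrow>nat. k(j := k j + 1))"
  define dec where "dec = (\<lambda>k::nat\<Rightarrow>nat. k(j := k j - 1))"
  define S where "S = {k\<in>tuples m. 1 \<le> k j}"
  have fin: "finite (tuples m)" by (rule finite_tuples)
  have "(\<Sum>k\<in>tuples m. real (k j) * W k m) = (\<Sum>k\<in>S. real (k j) * W k m)"
    unfolding S_def by (rule sum.mono_neutral_right) (use fin in auto)
  also have "\<dots> = (\<Sum>k\<in>S. a j * W (dec k) m)"
  proof (rule sum.cong[OF refl])
    fix k assume "k \<in> S"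
    then have "1 \<le> k j" by (simp add: S_def)
    then show "real (k j) * W k m = a j * W (dec k) m" using W_step[OF j] by (simp add: dec_def)
  qed
  also have "S = inc ` tuples (m - j)"
  proof
    show "S \<subseteq> inc ` tuples (m - j)"
    proof
      fix k assume kS: "k \<in> S"
      have k1: "1 \<le> k j" and kt: "k \<in> tuples m" using kS by (auto simp: S_def)
      have D: "\<forall>i. i \<notin> {1..m} \<longrightarrow> k i = 0" "(\<Sum>i=1..m. i * k i) = m"
        using tuplesD[OF kt order_refl] by auto
      have "(\<Sum>i=1..m. i * (dec k) i) + j * k j = m + j * (k j - 1)"
        unfolding dec_def using ws_upd[OF j, of k "k j - 1"] D(2) by simp
      then have "(\<Sum>i=1..m. i * (dec k) i) = m - j"
        using k1 by (simp add: algebra_simps diff_mult_distrib2)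
      moreover have "\<forall>i. i \<notin> {1..m} \<longrightarrow> dec k i = 0" using D(1) j by (auto simp: dec_def)
      ultimately have "dec k \<in> tuples (m - j)" by (intro tuplesI)
      moreover have "k = inc (dec k)" using k1 by (auto simp: inc_def dec_def)
      ultimately show "k \<in> inc ` tuples (m - j)" by blast
    qed
  next
    show "inc ` tuples (m - j) \<subseteq> S"
    proof
      fix k assume "k \<in> inc ` tuples (m - j)"
      then obtain k' where k': "k' \<in> tuples (m - j)" and k: "k = inc k'" by blast
      have D: "\<forall>i. i \<notin> {1..m} \<longrightarrow> k' i = 0" "(\<Sum>i=1..m. i * k' i) = m - j"
        using tuplesD[OF k', of m] by auto
      have "(\<Sum>i=1..m. i * k i) + j * k' j = (m - j) + j * (k' j + 1)"
        unfolding k inc_def using ws_upd[OF j, of k' "k' j + 1"] D(2) by simp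
      then have "(\<Sum>i=1..m. i * k i) = m" using j by (simp add: algebra_simps)
      moreover have "\<forall>i. i \<notin> {1..m} \<longrightarrow> k i = 0" using D(1) j by (auto simp: k inc_def)
      ultimately have "k \<in> tuples m" by (intro tuplesI)
      then show "k \<in> S" by (simp add: S_def k inc_def)
    qed
  qed
  also have "(\<Sum>k\<in>inc ` tuples (m - j). a j * W (dec k) m) = (\<Sum>k'\<in>tuples (m - j). a j * W (dec (inc k')) m)"
  proof -
    have inj: "inj_on inc (tuples (m - j))"
    proof (rule inj_onI)
      fix x y assume h: "inc x = inc y"
      show "x = y"
      proof
        fix i
        from h have "inc x i = inc y i" by simp
        then show "x i = y i" by (cases "i = j") (simp_all add: inc_def)
      qed
    qed
    show ?thesis by (subst sum.reindex[OF inj]) (simp add: o_def)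
  qed
  also have "\<dots> = (\<Sum>k'\<in>tuples (m - j). a j * W k' (m - j))"
  proof (rule sum.cong[OF refl])
    fix k' assume k': "k' \<in> tuples (m - j)"
    have "dec (inc k') = k'" by (auto simp: inc_def dec_def)
    moreover have "W k' m = W k' (m - j)"
      by (rule W_extend) (use k' in \<open>auto simp: tuples_def\<close>)
    ultimately show "a j * W (dec (inc k')) m = a j * W k' (m - j)" by simp
  qed
  also have "\<dots> = a j * c (m - j)" by (simp add: c_alt sum_distrib_left)
  finally show ?thesis .
qed

lemma recurrence:
  "real m * c m = (\<Sum>j=1..m. real j * a j * c (m - j))"
proof -
  have "real m * c m = (\<Sum>k\<in>tuples m. real m * W k m)" by (simp add: c_alt sum_distrib_left)
  also have "\<dots> = (\<Sum>k\<in>tuples m. \<Sum>j=1..m. real j * (real (k j) * W k m))"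
  proof (rule sum.cong[OF refl])
    fix k assume k: "k \<in> tuples m"
    have "real m = real (\<Sum>j=1..m. j * k j)" using tuplesD[OF k order_refl] by simp
    then show "real m * W k m = (\<Sum>j=1..m. real j * (real (k j) * W k m))"
      by (simp only: of_nat_sum of_nat_mult sum_distrib_right mult.assoc)
  qed
  also have "\<dots> = (\<Sum>j=1..m. \<Sum>k\<in>tuples m. real j * (real (k j) * W k m))"
    by (rule sum.swap)
  also have "\<dots> = (\<Sum>j=1..m. real j * a j * c (m - j))"
  proof (rule sum.cong[OF refl])
    fix j assume j: "j \<in> {1..m}"
    have "(\<Sum>k\<in>tuples m. real j * (real (k j) * W k m)) = real j * (\<Sum>k\<in>tuples m. real (k j) * W k m)"
      by (simp only: sum_distrib_left)
    also have "\<dots> = real j * a j * c (m - j)" using inner_step[OF j] by simp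
    finally show "(\<Sum>k\<in>tuples m. real j * (real (k j) * W k m)) = real j * a j * c (m - j)" .
  qed
  finally show ?thesis .
qed



lemma A_tendsto: "((\<lambda>\<epsilon>. A j \<epsilon>) \<longlongrightarrow> A j 0) (at_right 0)"
proof (cases "j \<ge> 3 \<and> odd j")
  case True
  then show ?thesis by (simp add: A_def)
next
  case False
  have "A j \<epsilon> = \<epsilon>" for \<epsilon> unfolding A_def by (rule if_not_P[OF False])
  then have "(\<lambda>\<epsilon>. A j \<epsilon>) = (\<lambda>\<epsilon>. \<epsilon>)" by (simp add: fun_eq_iff)
  moreover have "A j 0 = 0" using \<open>\<And>\<epsilon>. A j \<epsilon> = \<epsilon>\<close> by simp
  ultimately show ?thesis by (simp add: tendsto_ident_at)
qed

lemma lim_c: "Lim (at_right 0) (\<lambda>\<epsilon>. inner_sum n \<epsilon>) = c n"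
proof (rule tendsto_Lim)
  show "\<not> trivial_limit (at_right (0::real))" by simp
  show "((\<lambda>\<epsilon>. inner_sum n \<epsilon>) \<longlongrightarrow> c n) (at_right 0)"
    unfolding inner_sum_def c_def
    by (intro tendsto_sum tendsto_prod tendsto_divide tendsto_power A_tendsto tendsto_const) simp
qed

definition e :: "nat \<Rightarrow> real" where
  "e j = (if odd j then (-1)^((j - 1) div 2) / (fact ((j - 1) div 2) * real j) else 0)"

lemma e_odd: "e (2*m+1) = (-1)^m / (fact m * (2 * real m + 1))"
  by (simp add: e_def)

lemma e_summable: "summable (\<lambda>j. e j * y^j)"
proof -
  have "summable (\<lambda>m. e (2*m+1) * y^(2*m+1))"
  proof (rule summable_comparison_test')
    show "summable (\<lambda>m. \<bar>y\<bar> * (inverse (fact m) * (y^2)^m))"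
      using summable_exp[of "y^2"] by (rule summable_mult)
    fix m :: nat
    have "norm (e (2*m+1) * y^(2*m+1)) = \<bar>y\<bar> * (y^2)^m / (fact m * (2 * real m + 1))"
    proof -
      have "e (2*m+1) * y^(2*m+1) = (-1)^m * (y * (y^2)^m) / (fact m * (2 * real m + 1))"
        by (simp only: e_odd power_add power_mult) (simp add: field_simps)
      then show ?thesis by (simp add: abs_mult power_abs abs_divide)
    qed
    also have "\<dots> \<le> \<bar>y\<bar> * (y^2)^m / fact m"
      by (rule divide_left_mono) (auto intro: mult_nonneg_nonneg)
    finally show "norm (e (2*m+1) * y^(2*m+1)) \<le> \<bar>y\<bar> * (inverse (fact m) * (y^2)^m)"
      by (simp add: field_simps)
  qed
  then show ?thesis
    by (subst summable_mono_reindex[of "\<lambda>n. 2*n+1", symmetric])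
       (auto simp: e_def strict_mono_def elim!: oddE)
qed

definition E :: "real \<Rightarrow> real" where "E x = (\<Sum>j. e j * x^j)"

lemma E_0: "E 0 = 0"
  by (simp add: E_def e_def)

lemma diffs_e_sums: "(\<lambda>n. diffs e n * x^n) sums exp (-(x^2))"
proof -
  have "(\<lambda>m. (-(x^2))^m /\<^sub>R fact m) sums exp (-(x^2))" by (rule exp_converges)
  moreover have "(-(x^2))^m /\<^sub>R fact m = diffs e (2*m) * x^(2*m)" for m
  proof -
    have d: "diffs e (2*m) = (-1)^m / fact m"
    proof -
      have "diffs e (2*m) = (2 * real m + 1) * e (2*m+1)" by (simp add: diffs_def)
      also have "\<dots> = (2 * real m + 1) * ((-1)^m / (fact m * (2 * real m + 1)))" by (simp only: e_odd)
      also have "\<dots> = (-1)^m / fact m"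
      proof -
        have "(2 * real m + 1) \<noteq> 0" by (simp add: add_pos_nonneg)
        then show ?thesis by simp
      qed
      finally show ?thesis .
    qed
    have "(-(x^2))^m = (-1)^m * x^(2*m)" unfolding power_mult by (rule power_minus)
    then show ?thesis unfolding d by (simp add: divide_inverse mult_ac)
  qed
  ultimately have "(\<lambda>m. diffs e (2*m) * x^(2*m)) sums exp (-(x^2))" by simp
  then show ?thesis
    by (subst (asm) sums_mono_reindex[of "\<lambda>n. 2*n"])
       (auto simp: diffs_def e_def strict_mono_def elim!: evenE)
qed

lemma E_deriv: "(E has_field_derivative exp (-(x^2))) (at x)"
proof -
  have "(E has_field_derivative (\<Sum>n. diffs e n * x^n)) (at x)"
    unfolding E_def by (rule termdiffs_strong_converges_everywhere) (rule e_summable)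
  then show ?thesis using diffs_e_sums[of x] by (simp add: sums_iff)
qed

lemma oint_deriv:
  assumes "\<And>x. (F has_field_derivative f x) (at x)" "F 0 = 0"
  shows "oint 0 x f = F x"
proof (cases "0 \<le> x")
  case True
  have "(f has_integral (F x - F 0)) {0..x}"
    by (rule fundamental_theorem_of_calculus[OF True])
       (auto simp: has_real_derivative_iff_has_vector_derivative[symmetric] intro: has_field_derivative_at_within assms(1))
  then show ?thesis using True assms(2) by (simp add: oint_def integral_unique)
next
  case False
  have "(f has_integral (F 0 - F x)) {x..0}"
    by (rule fundamental_theorem_of_calculus) (use False in
       \<open>auto simp: has_real_derivative_iff_has_vector_derivative[symmetric] intro: has_field_derivative_at_within assms(1)\<close>)
  then show ?thesis using False assms(2) by (simp add: oint_def integral_unique)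
qed

lemma erf_E: "erf x = 2 / sqrt pi * E x"
proof -
  have "oint 0 x (\<lambda>s. exp (- (s^2))) = E x"
    by (rule oint_deriv[where f = "\<lambda>s. exp (- (s^2))", OF E_deriv E_0])
  then show ?thesis unfolding erf_def by simp
qed



lemma a_shift: "a (j+2) = - (2 / sqrt pi) * e j"
proof (cases "odd j")
  case True
  then obtain t where t: "j = 2*t+1" by (elim oddE)
  have c1: "j + 2 \<ge> 3 \<and> odd (j+2)" using t by simp
  have d1: "(j + 2 - 1) div 2 = t + 1" using t by simp
  have d2: "(j + 2 - 3) div 2 = t" using t by simp
  have r: "real (j+2) - 2 = 2 * real t + 1" using t by simp
  have "a (j+2) = 2 * (-1) ^ (t+1) / ((2 * real t + 1) * fact t * sqrt pi)"
    unfolding a_def A_def using c1 d1 d2 r by simp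
  also have "\<dots> = - (2 / sqrt pi) * ((-1)^t / (fact t * (2 * real t + 1)))"
    by (simp add: field_simps)
  finally show ?thesis using t e_odd by simp
next
  case False
  then have "\<not> (j + 2 \<ge> 3 \<and> odd (j+2))" by simp
  then have "a (j+2) = 0" unfolding a_def A_def by simp
  moreover have "e j = 0" using False by (simp add: e_def)
  ultimately show ?thesis by simp
qed

lemma a_01: "a 0 = 0" "a (Suc 0) = 0"
  by (simp_all add: a_def A_def)

lemma g_sums: "(\<lambda>j. a j * y^j) sums (- (y^2 * erf y))"
proof -
  have "(\<lambda>j. e j * y^j) sums E y" unfolding E_def using e_summable by (rule summable_sums)
  then have "(\<lambda>j. (- (2 / sqrt pi) * y^2) * (e j * y^j)) sums ((- (2 / sqrt pi) * y^2) * E y)"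
    by (rule sums_mult)
  moreover have "(- (2 / sqrt pi) * y^2) * (e j * y^j) = a (j+2) * y^(j+2)" for j
    by (simp only: a_shift) (simp add: power_add power2_eq_square mult_ac)
  moreover have "(- (2 / sqrt pi) * y^2) * E y = - (y^2 * erf y)"
    by (simp add: erf_E mult_ac)
  ultimately have "(\<lambda>j. a (j+2) * y^(j+2)) sums (- (y^2 * erf y))" by simp
  then show ?thesis
    by (subst (asm) sums_zero_iff_shift) (auto simp: a_01 less_2_cases_iff)
qed

lemma a_summable: "summable (\<lambda>j. a j * y^j)"
  using g_sums by (rule sums_summable)



lemma c_bounded:
  assumes R: "R > 0"
  shows "\<exists>B. \<forall>n. \<bar>c n\<bar> * R^n \<le> B"
proof -
  define \<alpha> where "\<alpha> j = real j * \<bar>a j\<bar> * R^j" for j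
  have "summable (\<lambda>n. norm (diffs a n * R^n))"
    by (rule powser_insidea[of _ "R + 1"]) (use R termdiff_converges_all[OF a_summable] in auto)
  then have sm: "summable (\<lambda>n. R * norm (diffs a n * R^n))" by (rule summable_mult)
  have eq: "(\<lambda>n. \<alpha> (Suc n)) = (\<lambda>n. R * norm (diffs a n * R^n))"
    using R by (simp add: fun_eq_iff \<alpha>_def diffs_def abs_mult mult_ac)
  have "summable (\<lambda>n. \<alpha> (Suc n))" by (subst eq) (rule sm)
  then have sa: "summable \<alpha>" by (simp only: summable_Suc_iff)
  define S where "S = suminf \<alpha>"
  have a0: "\<alpha> j \<ge> 0" for j using R by (simp add: \<alpha>_def)
  have partial: "(\<Sum>j=1..m. \<alpha> j) \<le> S" for m
    unfolding S_def by (rule sum_le_suminf[OF sa]) (use a0 in auto)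
  define d where "d n = \<bar>c n\<bar> * R^n" for n
  define N where "N = nat \<lceil>S\<rceil>"
  define B where "B = Max (d ` {..N})"
  have dB: "d n \<le> B" if "n \<le> N" for n
    unfolding B_def by (rule Max_ge) (use that in auto)
  have d0: "d n \<ge> 0" for n using R by (simp add: d_def)
  have B0: "B \<ge> 0" using dB[of 0] d0[of 0] by simp
  have "d n \<le> B" for n
  proof (induction n rule: less_induct)
    case (less n)
    show ?case
    proof (cases "n \<le> N")
      case True
      then show ?thesis by (rule dB)
    next
      case False
      then have nS: "S < real n" unfolding N_def by linarith
      have n1: "n \<ge> 1" using False by simp
      have "real n * d n = \<bar>real n * c n\<bar> * R^n" by (simp add: d_def abs_mult)
      also have "\<dots> = \<bar>\<Sum>j=1..n. real j * a j * c (n - j)\<bar> * R^n" by (simp only: recurrence)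
      also have "\<dots> \<le> (\<Sum>j=1..n. \<bar>real j * a j * c (n - j)\<bar>) * R^n"
        by (rule mult_right_mono) (use R in auto)
      also have "\<dots> = (\<Sum>j=1..n. \<alpha> j * d (n - j))"
        unfolding sum_distrib_right
      proof (rule sum.cong[OF refl])
        fix j assume j: "j \<in> {1..n}"
        have "R^n = R^j * R^(n-j)" using j by (simp add: power_add[symmetric])
        then show "\<bar>real j * a j * c (n - j)\<bar> * R^n = \<alpha> j * d (n - j)"
          by (simp add: \<alpha>_def d_def abs_mult mult_ac)
      qed
      also have "\<dots> \<le> (\<Sum>j=1..n. \<alpha> j * B)"
      proof (rule sum_mono)
        fix j assume j: "j \<in> {1..n}"
        have "d (n - j) \<le> B" using j by (intro less.IH) auto
        then show "\<alpha> j * d (n - j) \<le> \<alpha> j * B" by (rule mult_left_mono) (rule a0)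
      qed
      also have "\<dots> = (\<Sum>j=1..n. \<alpha> j) * B" by (simp add: sum_distrib_right)
      also have "\<dots> \<le> S * B" by (rule mult_right_mono[OF partial B0])
      also have "\<dots> \<le> real n * B" by (rule mult_right_mono) (use nS B0 in auto)
      finally have "real n * d n \<le> real n * B" .
      then show ?thesis using n1 by simp
    qed
  qed
  then show ?thesis unfolding d_def by blast
qed

lemma c_summable: "summable (\<lambda>n. c n * y^n)"
proof -
  obtain B where B: "\<forall>n. \<bar>c n\<bar> * (\<bar>y\<bar> + 1)^n \<le> B"
  proof -
    have "(0::real) < \<bar>y\<bar> + 1" by simp
    from c_bounded[OF this] show ?thesis using that by blast
  qed
  have "summable (\<lambda>n. norm (c n) * \<bar>y\<bar>^n)"
    by (rule Abel_lemma[of _ "\<bar>y\<bar> + 1" _ B]) (use B in auto)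
  then have "summable (\<lambda>n. norm (c n * y^n))" by (simp add: abs_mult power_abs)
  then show ?thesis by (rule summable_norm_cancel)
qed



definition P :: "real \<Rightarrow> real" where "P y = (\<Sum>n. c n * y^n)"
definition ga :: "real \<Rightarrow> real" where "ga y = (\<Sum>n. a n * y^n)"

lemma ga_eq: "ga y = - (y^2 * erf y)"
  unfolding ga_def using g_sums by (rule sums_unique[symmetric])

lemma diffs_c: "diffs c k = (\<Sum>i\<le>k. diffs a i * c (k - i))"
proof -
  have "diffs c k = real (Suc k) * c (Suc k)" by (simp add: diffs_def)
  also have "\<dots> = (\<Sum>j=Suc 0..Suc k. real j * a j * c (Suc k - j))" using recurrence[of "Suc k"] by simp
  also have "\<dots> = (\<Sum>i=0..k. real (Suc i) * a (Suc i) * c (Suc k - Suc i))"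
    by (rule sum.shift_bounds_cl_Suc_ivl)
  also have "\<dots> = (\<Sum>i\<le>k. diffs a i * c (k - i))"
    by (simp add: diffs_def atLeast0AtMost)
  finally show ?thesis .
qed

lemma abs_sum_of_summable:
  assumes "\<And>y. summable (\<lambda>n. f n * y^n)"
  shows "summable (\<lambda>n. norm (f n * (y::real)^n))"
  by (rule powser_insidea[of _ "\<bar>y\<bar> + 1"]) (use assms in auto)

lemma P_deriv_eq: "(\<Sum>n. diffs c n * y^n) = (\<Sum>n. diffs a n * y^n) * P y"
proof -
  have s1: "summable (\<lambda>n. norm (diffs a n * y^n))"
    by (rule abs_sum_of_summable) (rule termdiff_converges_all[OF a_summable])
  have s2: "summable (\<lambda>n. norm (c n * y^n))"
    by (rule abs_sum_of_summable) (rule c_summable)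
  have "(\<Sum>n. diffs a n * y^n) * P y = (\<Sum>k. \<Sum>i\<le>k. (diffs a i * y^i) * (c (k - i) * y^(k - i)))"
    unfolding P_def by (rule Cauchy_product[OF s1 s2])
  also have "\<dots> = (\<Sum>k. diffs c k * y^k)"
  proof (rule suminf_cong)
    fix k
    have "(\<Sum>i\<le>k. (diffs a i * y^i) * (c (k - i) * y^(k - i))) = (\<Sum>i\<le>k. (diffs a i * c (k - i)) * y^k)"
    proof (rule sum.cong[OF refl])
      fix i assume "i \<in> {..k}"
      then have "y^i * y^(k-i) = y^k" by (simp add: power_add[symmetric])
      then show "(diffs a i * y^i) * (c (k - i) * y^(k - i)) = (diffs a i * c (k - i)) * y^k"
        by (metis mult.assoc mult.left_commute)
    qed
    also have "\<dots> = diffs c k * y^k" by (simp add: diffs_c sum_distrib_right)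
    finally show "(\<Sum>i\<le>k. (diffs a i * y^i) * (c (k - i) * y^(k - i))) = diffs c k * y^k" .
  qed
  finally show ?thesis by simp
qed

lemma P_exp: "P y = exp (ga y)"
proof -
  define h where "h y = P y * exp (- ga y)" for y
  have dP: "(P has_field_derivative (\<Sum>n. diffs c n * y^n)) (at y)" for y
    unfolding P_def by (rule termdiffs_strong_converges_everywhere) (rule c_summable)
  have dg: "(ga has_field_derivative (\<Sum>n. diffs a n * y^n)) (at y)" for y
    unfolding ga_def by (rule termdiffs_strong_converges_everywhere) (rule a_summable)
  have dh: "DERIV h y :> 0" for y
  proof -
    have e1: "DERIV (\<lambda>y. exp (- ga y)) y :> exp (- ga y) * - (\<Sum>n. diffs a n * y^n)"
      by (rule DERIV_chain2[OF DERIV_exp DERIV_minus[OF dg]])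
    have d: "DERIV h y :> (\<Sum>n. diffs c n * y^n) * exp (- ga y) + (exp (- ga y) * - (\<Sum>n. diffs a n * y^n)) * P y"
      unfolding h_def by (rule DERIV_mult[OF dP e1])
    have eq: "(\<Sum>n. diffs c n * y^n) * exp (- ga y) + (exp (- ga y) * - (\<Sum>n. diffs a n * y^n)) * P y = 0"
      by (simp only: P_deriv_eq) (simp add: algebra_simps)
    show ?thesis using d unfolding eq .
  qed
  have "h y = h 0" by (rule DERIV_isconst_all) (use dh in blast)
  also have "h 0 = 1" by (simp add: h_def P_def ga_def c_0 a_01)
  finally have "P y * exp (- ga y) = 1" by (simp add: h_def)
  then show ?thesis by (simp add: exp_minus field_simps)
qed

definition dd :: "nat \<Rightarrow> real" where "dd m = (if m = 0 then 0 else c (m - 1) / real m)"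

lemma dd_summable: "summable (\<lambda>m. dd m * y^m)"
proof -
  have s2: "summable (\<lambda>n. norm (c n * y^n))"
    by (rule abs_sum_of_summable) (rule c_summable)
  have "summable (\<lambda>n. dd (Suc n) * y^(Suc n))"
  proof (rule summable_comparison_test')
    show "summable (\<lambda>n. \<bar>y\<bar> * norm (c n * y^n))" using s2 by (rule summable_mult)
    fix n :: nat
    have "norm (dd (Suc n) * y^(Suc n)) = \<bar>y\<bar> * norm (c n * y^n) / real (Suc n)"
      by (simp add: dd_def abs_mult power_abs abs_divide mult_ac)
    also have "\<dots> \<le> \<bar>y\<bar> * norm (c n * y^n) / 1"
      by (rule divide_left_mono) auto
    also have "\<dots> = \<bar>y\<bar> * norm (c n * y^n)" by simp
    finally show "norm (dd (Suc n) * y^(Suc n)) \<le> \<bar>y\<bar> * norm (c n * y^n)" .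
  qed
  then show ?thesis using summable_Suc_iff[of "\<lambda>m. dd m * y^m"] by simp
qed

definition F :: "real \<Rightarrow> real" where "F y = (\<Sum>m. dd m * y^m)"

lemma diffs_dd: "diffs dd = c"
  by (simp add: fun_eq_iff diffs_def dd_def)

lemma F_deriv: "(F has_field_derivative exp (- (y^2 * erf y))) (at y)"
proof -
  have "(F has_field_derivative (\<Sum>n. diffs dd n * y^n)) (at y)"
    unfolding F_def by (rule termdiffs_strong_converges_everywhere) (rule dd_summable)
  moreover have "(\<Sum>n. diffs dd n * y^n) = exp (- (y^2 * erf y))"
    unfolding diffs_dd using P_exp[of y] by (simp add: P_def ga_eq)
  ultimately show ?thesis by simp
qed

lemma F_0: "F 0 = 0" by (simp add: F_def dd_def)

lemma F_sums: "(\<lambda>n. c n * x^(n+1) / real (n+1)) sums F x"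
proof -
  have "(\<lambda>m. dd m * x^m) sums F x" unfolding F_def using dd_summable by (rule summable_sums)
  then have "(\<lambda>n. dd (Suc n) * x^(Suc n)) sums F x" by (subst sums_Suc_iff) (simp add: dd_def)
  moreover have "dd (Suc n) * x^(Suc n) = c n * x^(n+1) / real (n+1)" for n
    by (simp add: dd_def)
  ultimately show ?thesis by simp
qed

theorem lemma2:
  fixes x :: real
  shows "(\<lambda>n. Lim (at_right 0) (\<lambda>\<epsilon>. inner_sum n \<epsilon>) * x ^ (n + 1) / real (n + 1))
           sums (oint 0 x (\<lambda>\<xi>. exp (- (\<xi>^2 * erf \<xi>))))"
proof -
  have "oint 0 x (\<lambda>\<xi>. exp (- (\<xi>^2 * erf \<xi>))) = F x"
    by (rule oint_deriv[where f = "\<lambda>\<xi>. exp (- (\<xi>^2 * erf \<xi>))", OF F_deriv F_0])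
  then show ?thesis unfolding lim_c using F_sums by simp
qed

end
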